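(* The number of equilibria in $\Delta$ is finite.
   Context: Let $N\ge3$, $\alpha>1$, and $A_{i,j}=1-\delta_{i,j}$ for $i,j\le N$. Let $\Delta=\{v\in\mathbb R_+^N:\sum_iv_i=1,\ v_i\le3/4\ \forall i\}$. For $v\in\Delta$ let $v^\alpha=(v_i^\alpha)_i$, $H(v)=\sum_{i\neq j}v_i^\alpha v_j^\alpha$, $\pi_i(v)=v_i^\alpha(Av^\alpha)_i/H(v)$, and $F(v)=-v+\pi(v)$. An equilibrium is $v\in\Delta$ with $F(v)=0$. *)

theory Defs
  imports "HOL-Analysis.Analysis"
begin

text \<open>Vectors in R^N are indexed by a finite type 'n with CARD('n) = N.
  A is the matrix with entries 1 - delta_ij.\<close>

definition Amat :: "real^'n^'n" where
  "Amat = (\<chi> i j. if i = j then 0 else 1)"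

definition Simplex :: "(real^'n) set" where
  "Simplex = {v. (\<forall>i. 0 \<le> v $ i) \<and> (\<Sum>i\<in>UNIV. v $ i) = 1 \<and> (\<forall>i. v $ i \<le> 3/4)}"

definition vpow :: "real \<Rightarrow> real^'n \<Rightarrow> real^'n" where
  "vpow \<alpha> v = (\<chi> i. (v $ i) powr \<alpha>)"

definition Hfun :: "real \<Rightarrow> real^'n \<Rightarrow> real" where
  "Hfun \<alpha> v = (\<Sum>i\<in>UNIV. \<Sum>j\<in>UNIV. if i \<noteq> j then (v $ i) powr \<alpha> * (v $ j) powr \<alpha> else 0)"

definition pifun :: "real \<Rightarrow> real^'n \<Rightarrow> real^'n" where
  "pifun \<alpha> v = (\<chi> i. (vpow \<alpha> v $ i) * ((Amat *v vpow \<alpha> v) $ i) / Hfun \<alpha> v)"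

definition Ffun :: "real \<Rightarrow> real^'n \<Rightarrow> real^'n" where
  "Ffun \<alpha> v = - v + pifun \<alpha> v"

definition equilibria :: "real \<Rightarrow> (real^'n) set" where
  "equilibria \<alpha> = {v \<in> Simplex. Ffun \<alpha> v = 0}"

end

theory Submission
  imports Defs
begin


lemma rolle_pos:
  fixes f f' :: "real \<Rightarrow> real"
  assumes der: "\<And>x. x > 0 \<Longrightarrow> (f has_real_derivative f' x) (at x)"
    and "0 < x" "x < y" "f x = f y"
  shows "\<exists>d. x < d \<and> d < y \<and> f' d = 0"
proof -
  have cont: "continuous_on {x..y} f"
    using der assms(2) by (intro continuous_at_imp_continuous_on ballI DERIV_isCont[OF der]) auto
  have "\<And>z. x < z \<Longrightarrow> z < y \<Longrightarrow> (f has_derivative (\<lambda>v. f' z * v)) (at z)"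
    using der assms(2) by (simp add: has_field_derivative_def)
  from Rolle_deriv[OF assms(3,4) cont this] obtain z where
    "x < z" "z < y" "(\<lambda>v. f' z * v) = (\<lambda>v. 0)" by blast
  then show ?thesis by (metis mult_1_right)
qed

lemma finite_zeros:
  fixes f f' :: "real \<Rightarrow> real"
  assumes der: "\<And>x. x > 0 \<Longrightarrow> (f has_real_derivative f' x) (at x)"
    and fin: "finite {x. x > 0 \<and> f' x = 0}"
  shows "finite {x. x > 0 \<and> f x = 0}"
proof -
  define D where "D = {x. x > 0 \<and> f' x = 0}"
  define Z where "Z = {x. x > 0 \<and> f x = 0}"
  define h where "h z = (if \<exists>d\<in>D. d > z then Some (Min {d\<in>D. d > z}) else None)" for z
  have key: "\<exists>d\<in>D. z < d \<and> d < z'" if "z \<in> Z" "z' \<in> Z" "z < z'" for z z'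
  proof -
    have "0 < z" "f z = f z'" using that unfolding Z_def by auto
    then obtain d where "z < d" "d < z'" "f' d = 0" using rolle_pos[of f f' z z', OF der] \<open>z < z'\<close> by blast
    then show ?thesis using that unfolding Z_def D_def by (intro bexI[of _ d]) auto
  qed
  have "inj_on h Z"
  proof (rule inj_onI, rule ccontr)
    fix z z' assume zz: "z \<in> Z" "z' \<in> Z" "h z = h z'" "z \<noteq> z'"
    have *: False if zin: "z \<in> Z" "z' \<in> Z" "h z = h z'" "z < z'" for z z'
    proof -
      obtain d where d: "d \<in> D" "z < d" "d < z'" using key zin(1,2,4) by blast
      have fD: "finite {d\<in>D. d > z}" using fin D_def by (auto intro: finite_subset[OF _ fin])
      have hz: "h z = Some (Min {d\<in>D. d > z})" using d h_def by auto
      have "Min {d\<in>D. d > z} \<le> d" using d fD by (intro Min_le) auto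
      show False
      proof (cases "\<exists>d\<in>D. d > z'")
        case True
        have fD': "finite {d\<in>D. d > z'}" using fin D_def by (auto intro: finite_subset[OF _ fin])
        have "Min {d\<in>D. d > z'} \<in> {d\<in>D. d > z'}" using True fD' by (intro Min_in) auto
        then have "Min {d\<in>D. d > z'} > z'" by auto
        moreover have "h z' = Some (Min {d\<in>D. d > z'})" using True h_def by auto
        ultimately show False using hz zin(3) \<open>Min {d\<in>D. d > z} \<le> d\<close> d by auto
      next
        case False
        then show False using hz zin(3) h_def by auto
      qed
    qed
    show False using zz *[of z z'] *[of z' z] by (cases "z < z'") auto
  qed
  moreover have "h ` Z \<subseteq> insert None (Some ` D)"
  proof
    fix y assume "y \<in> h ` Z"
    then obtain z where "y = h z" by auto
    show "y \<in> insert None (Some ` D)"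
    proof (cases "\<exists>d\<in>D. d > z")
      case True
      have "finite {d\<in>D. d > z}" using fin D_def by (auto intro: finite_subset[OF _ fin])
      then have "Min {d\<in>D. d > z} \<in> {d\<in>D. d > z}" using True by (intro Min_in) auto
      then show ?thesis using True \<open>y = h z\<close> h_def by auto
    qed (use \<open>y = h z\<close> h_def in auto)
  qed
  moreover have "finite (insert None (Some ` D))" using fin D_def by (auto intro: finite_subset[OF _ fin])
  ultimately show ?thesis using inj_on_finite Z_def by blast
qed



definition psi :: "real \<Rightarrow> real \<Rightarrow> real \<Rightarrow> real \<Rightarrow> real" where
  "psi a k m t = (k-1)*t powr a - k*t + m - (m-1)*t powr (1-a)"

lemma psi_d1: "t > 0 \<Longrightarrow> (psi a k m has_real_derivative
   ((k-1)*(a * t powr (a-1)) - k - (m-1)*((1-a) * t powr (-a)))) (at t)"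
  unfolding psi_def
  using has_real_derivative_powr[of t a] has_real_derivative_powr[of t "1-a"]
  by (auto intro!: derivative_eq_intros)

lemma psi_d2: "t > 0 \<Longrightarrow> ((\<lambda>t. (k-1)*(a * t powr (a-1)) - k - (m-1)*((1-a) * t powr (-a))) has_real_derivative
   ((k-1)*(a * ((a-1) * t powr (a-2))) - (m-1)*((1-a) * ((-a) * t powr (-a-1))))) (at t)"
  using has_real_derivative_powr[of t "a-1"] has_real_derivative_powr[of t "-a"]
  by (auto intro!: derivative_eq_intros simp: algebra_simps)



lemma finite_psi:
  assumes "a > 1"
  shows "finite {t. t > 0 \<and> psi a k m t = 0}"
proof -
  define d1 where "d1 t = (k-1)*(a * t powr (a-1)) - k - (m-1)*((1-a) * t powr (-a))" for t
  define d2 where "d2 t = (k-1)*(a * ((a-1) * t powr (a-2))) - (m-1)*((1-a) * ((-a) * t powr (-a-1)))" for t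
  have D1: "\<And>t. t > 0 \<Longrightarrow> (psi a k m has_real_derivative d1 t) (at t)"
    using psi_d1 d1_def by simp
  have D2: "\<And>t. t > 0 \<Longrightarrow> (d1 has_real_derivative d2 t) (at t)"
    using psi_d2 unfolding d1_def d2_def by simp
  have "finite {t. t > 0 \<and> d1 t = 0}"
  proof (cases "k = 1 \<and> m = 1")
    case True
    then have "{t. t > 0 \<and> d1 t = 0} = {}" unfolding d1_def by auto
    then show ?thesis by (metis finite.emptyI)
  next
    case False
    have key: "d2 t * t powr (a+1) = a*(a-1) * ((k-1) * t powr (2*a-1) - (m-1))" if "t > 0" for t
    proof -
      have e1: "t powr (a-2) * t powr (a+1) = t powr (2*a-1)"
        by (simp add: powr_add[symmetric]) 
      have e2: "t powr (-a-1) * t powr (a+1) = 1"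
        using that by (simp add: powr_add[symmetric])
      show ?thesis unfolding d2_def
        using e1 e2 by (simp add: algebra_simps)
    qed
    have "finite {t. t > 0 \<and> d2 t = 0}"
    proof (cases "k = 1")
      case True
      then have "m \<noteq> 1" using False by auto
      have "d2 t \<noteq> 0" if "t > 0" for t
      proof
        assume "d2 t = 0"
        then have "a*(a-1) * ((k-1) * t powr (2*a-1) - (m-1)) = 0" using key[OF that] by simp
        then show False using True \<open>m \<noteq> 1\<close> assms by simp
      qed
      then have "{t. t > 0 \<and> d2 t = 0} = {}" by auto
      then show ?thesis by (metis finite.emptyI)
    next
      case k: False
      have "{t. t > 0 \<and> d2 t = 0} \<subseteq> {((m-1)/(k-1)) powr (1/(2*a-1))}"
      proof
        fix t assume t: "t \<in> {t. t > 0 \<and> d2 t = 0}"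
        then have "(k-1) * t powr (2*a-1) = m-1" using key[of t] assms by auto
        then have "t powr (2*a-1) = (m-1)/(k-1)" using k by (simp add: field_simps)
        then have "((m-1)/(k-1)) powr (1/(2*a-1)) = t powr ((2*a-1) * (1/(2*a-1)))"
          by (metis powr_powr)
        also have "\<dots> = t" using assms t by simp
        finally show "t \<in> {((m-1)/(k-1)) powr (1/(2*a-1))}" by simp
      qed
      then show ?thesis using finite_subset by blast
    qed
    then show ?thesis using finite_zeros[OF D2] by blast
  qed
  then show ?thesis using finite_zeros[OF D1] by blast
qed



definition gfun :: "real \<Rightarrow> real \<Rightarrow> real \<Rightarrow> real" where
  "gfun a s x = s * x powr (a-1) - x powr (2*a-1)"

lemma g_three:
  assumes "a > 1" "0 < x" "x < y" "y < z" "gfun a s x = gfun a s y" "gfun a s y = gfun a s z"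
  shows False
proof -
  define g' where "g' x = s*((a-1)* x powr (a-2)) - (2*a-1)* x powr (2*a-2)" for x
  have D: "\<And>x. x > 0 \<Longrightarrow> (gfun a s has_real_derivative g' x) (at x)"
    unfolding gfun_def g'_def
    using has_real_derivative_powr[of _ "a-1"] has_real_derivative_powr[of _ "2*a-1"]
    by (auto intro!: derivative_eq_intros simp: algebra_simps)
  have key: "g' x * x powr (2-a) = s*(a-1) - (2*a-1) * x powr a" if "x > 0" for x
  proof -
    have e1: "x powr (a-2) * x powr (2-a) = 1"
      using that by (simp add: powr_add[symmetric])
    have e2: "x powr (2*a-2) * x powr (2-a) = x powr a"
      by (simp add: powr_add[symmetric])
    show ?thesis unfolding g'_def using e1 e2 by (simp add: algebra_simps)
  qed
  obtain d1 where d1: "x < d1" "d1 < y" "g' d1 = 0" using rolle_pos[OF D assms(2,3,5)] by blast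
  obtain d2 where d2: "y < d2" "d2 < z" "g' d2 = 0" using rolle_pos[OF D _ assms(4,6)] assms by force
  have "d1 powr a = d2 powr a"
    using key[of d1] key[of d2] d1 d2 assms by auto
  moreover have "d1 powr a < d2 powr a"
    using d1 d2 assms by (intro powr_less_mono2) auto
  ultimately show False by simp
qed



lemma sum_AB:
  fixes A B :: "'n::finite set"
  assumes "A \<inter> B = {}"
  shows "(\<Sum>i\<in>UNIV. if i \<in> A then p else if i \<in> B then q else 0) = real (card A) * p + real (card B) * q"
proof -
  have "(\<Sum>i\<in>UNIV. if i \<in> A then p else if i \<in> B then q else 0) =
        (\<Sum>i\<in>UNIV. (if i \<in> A then p else 0) + (if i \<in> B then q else 0))"
    using assms by (intro sum.cong) auto
  also have "\<dots> = real (card A) * p + real (card B) * q"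
    by (simp add: sum.distrib sum.If_cases)
  finally show ?thesis .
qed

lemma Amat_row:
  fixes w :: "real^'n::finite"
  shows "(Amat *v w) $ i = (\<Sum>j\<in>UNIV. w $ j) - w $ i"
proof -
  have "(Amat *v w) $ i = (\<Sum>j\<in>UNIV. (if i = j then 0 else 1) * w $ j)"
    by (simp add: matrix_vector_mult_def Amat_def)
  also have "\<dots> = (\<Sum>j\<in>UNIV. w $ j - (if j = i then w $ j else 0))"
    by (intro sum.cong) auto
  also have "\<dots> = (\<Sum>j\<in>UNIV. w $ j) - w $ i"
    by (simp add: sum_subtractf)
  finally show ?thesis .
qed



lemma eq_props:
  fixes v :: "real^'n::finite"
  assumes v: "v \<in> equilibria a" and a: "a > 1"
  shows "Hfun a v \<noteq> 0"
    and "\<And>i. v $ i > 0 \<Longrightarrow> gfun a (\<Sum>j\<in>UNIV. v $ j powr a) (v $ i) = Hfun a v"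
proof -
  have vS: "v \<in> Simplex" and F0: "Ffun a v = 0" using v by (auto simp: equilibria_def)
  have fixp: "pifun a v = v"
  proof -
    have "pifun a v = v + Ffun a v" by (simp add: Ffun_def)
    then show ?thesis using F0 by simp
  qed
  define s where "s = (\<Sum>j\<in>UNIV. v $ j powr a)"
  define H where "H = Hfun a v"
  have comp: "v $ i = v $ i powr a * (s - v $ i powr a) / H" for i
  proof -
    have "v $ i = pifun a v $ i" using fixp by simp
    also have "\<dots> = v $ i powr a * (s - v $ i powr a) / H"
      by (simp add: pifun_def Amat_row vpow_def s_def H_def)
    finally show ?thesis .
  qed
  show H0: "Hfun a v \<noteq> 0"
  proof
    assume "Hfun a v = 0"
    then have "\<And>i. v $ i = 0" using comp H_def by simp
    then have "(\<Sum>i\<in>UNIV. v $ i) = 0" by simp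
    then show False using vS by (simp add: Simplex_def)
  qed
  fix i assume xi: "v $ i > 0"
  define x where "x = v $ i"
  have x0: "x > 0" using xi x_def by simp
  have e1: "x powr a = x * x powr (a-1)"
  proof -
    have "x powr a = x powr (1 + (a-1))" by simp
    also have "\<dots> = x * x powr (a-1)" using x0 by (simp only: powr_add powr_one)
    finally show ?thesis .
  qed
  have e2: "x powr a * x powr a = x * x powr (2*a-1)"
  proof -
    have "x powr a * x powr a = x powr (1 + (2*a-1))" by (simp add: powr_add[symmetric])
    also have "\<dots> = x * x powr (2*a-1)" using x0 by (simp only: powr_add powr_one)
    finally show ?thesis .
  qed
  have "x * H = x powr a * s - x powr a * x powr a"
    using comp[of i] H0 H_def x_def by (simp add: field_simps)
  then have "x * H = x * (s * x powr (a-1) - x powr (2*a-1))"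
  proof -
    have gen: "\<And>X P Q R S. X * H = R * s - R * R \<Longrightarrow> R = X * P \<Longrightarrow> R * R = X * Q \<Longrightarrow> X * H = X * (s * P - Q)"
    proof -
      fix X P Q R S assume h1: "X * H = R * s - R * R" and h2: "R = X * P" and h3: "R * R = X * Q"
      have "X * H = R * s - X * Q" using h1 h3 by simp
      also have "\<dots> = X * (s * P - Q)" using h2 by (simp add: right_diff_distrib mult.commute mult.left_commute)
      finally show "X * H = X * (s * P - Q)" .
    qed
    show ?thesis by (rule gen[OF _ e1 e2]) fact
  qed
  then have "H = s * x powr (a-1) - x powr (2*a-1)" using x0 by simp
  then show "gfun a (\<Sum>j\<in>UNIV. v $ j powr a) (v $ i) = Hfun a v"
    by (simp add: gfun_def s_def H_def x_def)
qed



lemma pw1: fixes x c :: real shows "x > 0 \<Longrightarrow> x powr c = x * x powr (c-1)"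
proof -
  assume "x > 0"
  have "x powr c = x powr (1 + (c-1))" by simp
  also have "\<dots> = x * x powr (c-1)" unfolding powr_add using \<open>x > 0\<close> by simp
  finally show ?thesis .
qed

lemma pw2: fixes x c :: real shows "x > 0 \<Longrightarrow> x powr (2*c-1) = x * x powr (c-1) * x powr (c-1)"
proof -
  assume "x > 0"
  have "x powr (2*c-1) = x powr (1 + ((c-1) + (c-1)))" by (simp add: algebra_simps)
  also have "\<dots> = x * x powr (c-1) * x powr (c-1)" unfolding powr_add using \<open>x > 0\<close> by (simp add: mult.assoc)
  finally show ?thesis .
qed

lemma pw3: fixes x c :: real shows "x > 0 \<Longrightarrow> x powr (1-c) = 1 / x powr (c-1)"
  by (simp add: powr_minus_divide[symmetric])

lemma psi_from_g:
  assumes "a > 1" "b > 0" "t > 0"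
    and s: "s = k * (t*b) powr a + m * b powr a"
    and g: "gfun a s (t*b) = gfun a s b"
  shows "psi a k m t = 0"
proof -
  define P where "P = t powr (a-1)"
  define Q where "Q = b powr (a-1)"
  have P0: "P > 0" and Q0: "Q > 0" using assms by (auto simp: P_def Q_def)
  have tb: "(t*b) powr c = t powr c * b powr c" for c using assms by (simp add: powr_mult)
  have sP: "s = k*t*P*b*Q + m*b*Q" using s tb pw1[OF assms(3), of a] pw1[OF assms(2), of a]
    unfolding P_def Q_def by simp
  have ga: "gfun a s (t*b) = s*P*Q - t*P*P*b*Q*Q"
    unfolding gfun_def tb pw2[OF assms(3)] pw2[OF assms(2)] P_def Q_def by (simp add: algebra_simps)
  have gb: "gfun a s b = s*Q - b*Q*Q"
    unfolding gfun_def pw2[OF assms(2)] Q_def by (simp add: algebra_simps)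
  have "b*Q*Q*((k*t*P + m)*P - t*P*P - (k*t*P + m - 1)) = 0"
    using g ga gb sP by (simp add: algebra_simps)
  then have br: "(k*t*P + m)*P - t*P*P - (k*t*P + m - 1) = 0" using P0 Q0 assms by simp
  have "psi a k m t * P = (k*t*P + m)*P - t*P*P - (k*t*P + m - 1)"
    unfolding psi_def pw1[OF assms(3), of a] pw3[OF assms(3)] P_def[symmetric]
    using P0 by (simp add: field_simps)
  then show ?thesis using br P0 by simp
qed



definition Phi :: "'n::finite set \<Rightarrow> 'n set \<Rightarrow> real \<Rightarrow> real^'n" where
  "Phi A B t = (\<chi> i. if i \<in> A then t / (real (card A) * t + real (card B))
      else if i \<in> B then 1 / (real (card A) * t + real (card B)) else 0)"

definition Tset :: "real \<Rightarrow> nat \<Rightarrow> real set" where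
  "Tset a N = insert 1 (\<Union>k\<in>{..N}. \<Union>m\<in>{..N}. {t. t > 0 \<and> psi a (real k) (real m) t = 0})"

lemma finite_Tset: "a > 1 \<Longrightarrow> finite (Tset a N)"
  unfolding Tset_def using finite_psi by auto

lemma eq_repr:
  fixes v :: "real^'n::finite"
  assumes v: "v \<in> equilibria a" and a: "a > 1"
  shows "\<exists>A B t. t \<in> Tset a CARD('n) \<and> v = Phi A B t"
proof -
  have vS: "v \<in> Simplex" using v by (auto simp: equilibria_def)
  have nonneg: "\<And>i. v $ i \<ge> 0" and sum1: "(\<Sum>i\<in>UNIV. v $ i) = 1" using vS by (auto simp: Simplex_def)
  define s where "s = (\<Sum>j\<in>UNIV. v $ j powr a)"
  define H where "H = Hfun a v"
  have gH: "\<And>i. v $ i > 0 \<Longrightarrow> gfun a s (v $ i) = H" using eq_props(2)[OF v a] s_def H_def by simp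
  define am where "am = Max (range (\<lambda>i. v $ i))"
  have le_am: "\<And>i. v $ i \<le> am" unfolding am_def by (intro Max_ge) auto
  have "am \<in> range (\<lambda>i. v $ i)" unfolding am_def by (intro Max_in) auto
  then obtain i0 where i0: "v $ i0 = am" by auto
  have am0: "am > 0"
  proof (rule ccontr)
    assume "\<not> am > 0"
    then have "v $ i = 0" for i using le_am[of i] nonneg[of i] by linarith
    then show False using sum1 by simp
  qed
  define A where "A = {i. v $ i = am}"
  define B where "B = {i. 0 < v $ i \<and> v $ i < am}"
  have AB: "A \<inter> B = {}" unfolding A_def B_def by auto
  have cases3: "v $ i = 0 \<or> i \<in> A \<or> i \<in> B" for i
    unfolding A_def B_def using le_am[of i] nonneg[of i] by auto
  have kA: "card A \<le> CARD('n)" "card B \<le> CARD('n)" by (auto intro: card_mono)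
  show ?thesis
  proof (cases "B = {}")
    case True
    have vr: "v = (\<chi> i. if i \<in> A then am else if i \<in> B then 0 else 0)"
      using cases3 True unfolding vec_eq_iff A_def by auto
    have "real (card A) * am = 1" using sum1 vr sum_AB[OF AB, of am 0] by simp
    then have "am = 1 / (real (card A) * 1 + real (card B))" using True
      by (auto simp: eq_divide_eq mult.commute)
    then have "v = Phi A B 1" using vr True unfolding Phi_def vec_eq_iff by auto
    then show ?thesis unfolding Tset_def by blast
  next
    case False
    then obtain j where j: "j \<in> B" by auto
    define b where "b = v $ j"
    have b0: "0 < b" "b < am" using j unfolding B_def b_def by auto
    have gam: "gfun a s am = H" using gH[of i0] i0 am0 by simp
    have gb: "gfun a s b = H" using gH b0 b_def by simp
    have Bb: "v $ i = b" if "i \<in> B" for i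
    proof (rule ccontr)
      assume ne: "v $ i \<noteq> b"
      have vi: "0 < v $ i" "v $ i < am" using that unfolding B_def by auto
      have gi: "gfun a s (v $ i) = H" using gH vi by simp
      show False
      proof (cases "v $ i < b")
        case True
        then show ?thesis using g_three[OF a vi(1) True b0(2)] gi gb gam by metis
      next
        case False
        then have "b < v $ i" using ne by simp
        then show ?thesis using g_three[OF a b0(1) _ vi(2)] gi gb gam by metis
      qed
    qed
    have vr: "v = (\<chi> i. if i \<in> A then am else if i \<in> B then b else 0)"
      using cases3 Bb unfolding vec_eq_iff A_def by auto
    have vpr: "(\<lambda>i. v $ i powr a) = (\<lambda>i. if i \<in> A then am powr a else if i \<in> B then b powr a else 0)"
      using vr by (auto simp: fun_eq_iff)
    define k where "k = real (card A)"
    define m where "m = real (card B)"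
    have lin: "k * am + m * b = 1" using sum1 vr sum_AB[OF AB, of am b] k_def m_def by simp
    define t where "t = am / b"
    have t0: "t > 0" and amt: "am = t * b" using b0 am0 by (auto simp: t_def)
    have sexp: "s = k * (t*b) powr a + m * b powr a"
      unfolding s_def vpr sum_AB[OF AB] k_def m_def amt by simp
    have "psi a k m t = 0"
      using psi_from_g[OF a b0(1) t0 sexp] gam gb amt by simp
    then have tT: "t \<in> Tset a CARD('n)"
      unfolding Tset_def k_def m_def using t0 kA by blast
    have den: "k * t + m = 1 / b" using lin amt b0 by (simp add: field_simps)
    have e1: "1 / (real (card A) * t + real (card B)) = b" using den b0 k_def m_def by simp
    have e2: "t / (real (card A) * t + real (card B)) = am"
      using e1 amt by (metis times_divide_eq_right mult.right_neutral)
    have "v = Phi A B t"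
      unfolding Phi_def e1 e2 by (rule vr)
    then show ?thesis using tT by blast
  qed
qed

theorem lemma4p6:
  fixes \<alpha> :: real
  assumes "CARD('n::finite) \<ge> 3" and "\<alpha> > 1"
  shows "finite (equilibria \<alpha> :: (real^'n) set)"
proof -
  have "(equilibria \<alpha> :: (real^'n) set) \<subseteq> (\<lambda>(A, B, t). Phi A B t) ` (UNIV \<times> UNIV \<times> Tset \<alpha> CARD('n))"
  proof
    fix v :: "real^'n" assume "v \<in> equilibria \<alpha>"
    then obtain A B t where "t \<in> Tset \<alpha> CARD('n)" "v = Phi A B t" using eq_repr assms(2) by blast
    then show "v \<in> (\<lambda>(A, B, t). Phi A B t) ` (UNIV \<times> UNIV \<times> Tset \<alpha> CARD('n))"
      by (intro image_eqI[of _ _ "(A, B, t)"]) auto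
  qed
  moreover have "finite (UNIV \<times> UNIV \<times> Tset \<alpha> CARD('n) :: ('n set \<times> 'n set \<times> real) set)"
    using finite_Tset[OF assms(2)] by simp
  ultimately show ?thesis using finite_subset by blast
qed

end
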